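(* Let $G$ be a finite chordal graph and $v$ a vertex of $G$ that lies in a maximal clique of size at least three. Then $v$ is incident on at least two exposed edges of $G$.
   Context: All graphs are finite, undirected, simple. A graph is chordal if every induced cycle has length three. A facet edge of $G$ is an edge $xy$ such that $\{x,y\}$ is a maximal clique of $G$. An edge of $G$ is exposed if it is contained in a unique maximal clique of $G$ and it is not a facet edge. *)

theory Defs
  imports Main
begin

definition simple_graph :: "'a set \<Rightarrow> ('a \<Rightarrow> 'a \<Rightarrow> bool) \<Rightarrow> bool" where
  "simple_graph V E \<longleftrightarrow> finite V \<and> (\<forall>x y. E x y \<longrightarrow> x \<in> V \<and> y \<in> V)
     \<and> (\<forall>x y. E x y \<longrightarrow> E y x) \<and> (\<forall>x. \<not> E x x)"

definition clique :: "'a set \<Rightarrow> ('a \<Rightarrow> 'a \<Rightarrow> bool) \<Rightarrow> 'a set \<Rightarrow> bool" where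
  "clique V E C \<longleftrightarrow> C \<subseteq> V \<and> (\<forall>x\<in>C. \<forall>y\<in>C. x \<noteq> y \<longrightarrow> E x y)"

definition maximal_clique :: "'a set \<Rightarrow> ('a \<Rightarrow> 'a \<Rightarrow> bool) \<Rightarrow> 'a set \<Rightarrow> bool" where
  "maximal_clique V E C \<longleftrightarrow> clique V E C \<and> (\<forall>D. clique V E D \<and> C \<subseteq> D \<longrightarrow> D = C)"

definition is_cycle :: "'a set \<Rightarrow> ('a \<Rightarrow> 'a \<Rightarrow> bool) \<Rightarrow> 'a list \<Rightarrow> bool" where
  "is_cycle V E cs \<longleftrightarrow> length cs \<ge> 3 \<and> distinct cs \<and> set cs \<subseteq> V \<and>
     (\<forall>i < length cs. E (cs ! i) (cs ! ((i + 1) mod length cs)))"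

definition induced_cycle :: "'a set \<Rightarrow> ('a \<Rightarrow> 'a \<Rightarrow> bool) \<Rightarrow> 'a list \<Rightarrow> bool" where
  "induced_cycle V E cs \<longleftrightarrow> is_cycle V E cs \<and>
     (\<forall>i < length cs. \<forall>j < length cs. E (cs ! i) (cs ! j) \<longrightarrow>
        j = (i + 1) mod length cs \<or> i = (j + 1) mod length cs)"

definition chordal :: "'a set \<Rightarrow> ('a \<Rightarrow> 'a \<Rightarrow> bool) \<Rightarrow> bool" where
  "chordal V E \<longleftrightarrow> (\<forall>cs. induced_cycle V E cs \<longrightarrow> length cs = 3)"

definition facet_edge :: "'a set \<Rightarrow> ('a \<Rightarrow> 'a \<Rightarrow> bool) \<Rightarrow> 'a \<Rightarrow> 'a \<Rightarrow> bool" where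
  "facet_edge V E x y \<longleftrightarrow> E x y \<and> maximal_clique V E {x, y}"

definition exposed_edge :: "'a set \<Rightarrow> ('a \<Rightarrow> 'a \<Rightarrow> bool) \<Rightarrow> 'a \<Rightarrow> 'a \<Rightarrow> bool" where
  "exposed_edge V E x y \<longleftrightarrow> E x y \<and>
     (\<exists>!C. maximal_clique V E C \<and> {x, y} \<subseteq> C) \<and> \<not> facet_edge V E x y"

end

theory Submission
  imports Defs
begin


lemma cycle_contra:
  assumes sg: "simple_graph V E" and ch: "chordal V E"
    and qV: "set q \<subseteq> V" and aV: "a \<in> V" and aq: "a \<notin> set q" and dq: "distinct q"
    and len: "length q \<ge> 3"
    and st: "\<And>i. Suc i < length q \<Longrightarrow> E (q!i) (q!Suc i)"
    and ind: "\<And>i j. i < length q \<Longrightarrow> j < length q \<Longrightarrow> E (q!i) (q!j) \<Longrightarrow> i = Suc j \<or> j = Suc i"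
    and a0: "E a (q!0)" and an: "E a (q!(length q - 1))"
    and amid: "\<And>i. 0 < i \<Longrightarrow> i < length q - 1 \<Longrightarrow> \<not> E a (q!i)"
  shows False
proof -
  have sym: "\<And>x y. E x y \<Longrightarrow> E y x" and irr: "\<And>x. \<not> E x x"
    using sg unfolding simple_graph_def by blast+
  define n where "n = length q"
  have cyc: "is_cycle V E (a#q)"
    unfolding is_cycle_def
  proof (intro conjI allI impI)
    show "3 \<le> length (a#q)" using len by simp
    show "distinct (a#q)" using aq dq by simp
    show "set (a#q) \<subseteq> V" using qV aV by simp
    fix i assume i: "i < length (a#q)"
    show "E ((a # q) ! i) ((a # q) ! ((i + 1) mod length (a # q)))"
    proof (cases i)
      case 0 then show ?thesis using a0 len by (cases q) auto
    next
      case (Suc k)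
      show ?thesis
      proof (cases "Suc k < n")
        case True
        then have "(i+1) mod length (a#q) = Suc (Suc k)" using Suc n_def by simp
        then show ?thesis using st[of k] True Suc n_def by simp
      next
        case False
        then have "k = n - 1" using i Suc n_def by simp
        moreover have "i + 1 = length (a#q)" using i Suc False n_def by simp
        then have "(i+1) mod length (a#q) = 0" by simp
        ultimately show ?thesis using sym[OF an] Suc n_def by simp
      qed
    qed
  qed
  have "induced_cycle V E (a#q)"
    unfolding induced_cycle_def
  proof (intro conjI allI impI cyc)
    fix i j assume i: "i < length (a#q)" and j: "j < length (a#q)"
      and e: "E ((a#q)!i) ((a#q)!j)"
    show "j = (i + 1) mod length (a # q) \<or> i = (j + 1) mod length (a # q)"
    proof (cases i)
      case 0
      show ?thesis
      proof (cases j)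
        case 0 then show ?thesis using e \<open>i=0\<close> irr by simp
      next
        case (Suc l)
        then have "E a (q!l)" using e \<open>i=0\<close> by simp
        then have "l = 0 \<or> l = n - 1" using amid[of l] Suc j n_def by force
        then show ?thesis using Suc \<open>i=0\<close> n_def len by auto
      qed
    next
      case (Suc k)
      show ?thesis
      proof (cases j)
        case 0
        then have "E a (q!k)" using e Suc sym by simp
        then have "k = 0 \<or> k = n - 1" using amid[of k] Suc i n_def by force
        then show ?thesis using Suc \<open>j=0\<close> n_def len by auto
      next
        case (Suc l)
        have "k = Suc l \<or> l = Suc k" using ind[of k l] e Suc \<open>i = Suc k\<close> i j by simp
        then show ?thesis using Suc \<open>i = Suc k\<close> i j by auto
      qed
    qed
  qed
  then have "length (a#q) = 3" using ch unfolding chordal_def by blast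
  then show False using len by simp
qed



lemma walk_exists:
  assumes "r\<^sup>*\<^sup>* u v"
  shows "\<exists>p. p \<noteq> [] \<and> hd p = u \<and> last p = v \<and> successively r p \<and> (\<forall>z\<in>set p. r\<^sup>*\<^sup>* u z)"
  using assms
proof (induction rule: rtranclp_induct)
  case base
  then show ?case by (intro exI[of _ "[u]"]) auto
next
  case (step y z)
  then obtain p where p: "p \<noteq> []" "hd p = u" "last p = y" "successively r p" "\<forall>z\<in>set p. r\<^sup>*\<^sup>* u z"
    by blast
  have "successively r (p @ [z])" using p step by (simp add: successively_append_iff)
  moreover have "\<forall>w\<in>set (p@[z]). r\<^sup>*\<^sup>* u w" using p step by auto
  ultimately show ?case using p by (intro exI[of _ "p @ [z]"]) auto
qed

lemma shortcut:
  assumes "successively E q" "0 < k" "k \<le> j" "j < length q" "E (q!(k-1)) (q!j)"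
  shows "successively E (take k q @ drop j q)"
proof -
  have "successively E (take k q @ drop k q)" using assms(1) by simp
  then have t: "successively E (take k q)" by (simp only: successively_append_iff)
  have "successively E (take j q @ drop j q)" using assms(1) by simp
  then have d: "successively E (drop j q)" by (simp only: successively_append_iff)
  have "take k q \<noteq> []" using assms by (cases q) auto
  then have "last (take k q) = q!(k-1)" using assms
    by (simp add: last_conv_nth min_def)
  moreover have "hd (drop j q) = q!j" using assms by (simp add: hd_drop_conv_nth)
  ultimately show ?thesis using t d assms by (simp add: successively_append_iff)
qed

lemma shortest_induced:
  assumes sg: "simple_graph V E" and sq: "successively E q" and ne: "q \<noteq> []"
    and mn: "\<And>q'. q' \<noteq> [] \<Longrightarrow> hd q' = hd q \<Longrightarrow> last q' = last q \<Longrightarrow> successively E q'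
              \<Longrightarrow> set q' \<subseteq> set q \<Longrightarrow> length q \<le> length q'"
  shows "distinct q \<and> (\<forall>i j. i < length q \<longrightarrow> j < length q \<longrightarrow> E (q!i) (q!j) \<longrightarrow> i = Suc j \<or> j = Suc i)"
proof -
  have sym: "\<And>x y. E x y \<Longrightarrow> E y x" and irr: "\<And>x. \<not> E x x"
    using sg unfolding simple_graph_def by blast+
  have setsub: "set (take k q @ drop j q) \<subseteq> set q" for k j
    using set_take_subset set_drop_subset by (metis Un_least set_append)
  have nope: False if "0 < k" "k < j" "j < length q" "E (q!(k-1)) (q!j)" for k j
  proof -
    let ?q = "take k q @ drop j q"
    have "successively E ?q" using shortcut[OF sq that(1) _ that(3,4)] that(2) by simp
    moreover have "?q \<noteq> []" using that by simp
    moreover have "hd ?q = hd q" using that ne by (simp add: hd_append)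
    moreover have "last ?q = last q" using that by simp
    moreover have "length ?q < length q" using that by (simp add: min_def)
    ultimately show False using mn[of ?q] setsub[of k j] by fastforce
  qed
  have nope0: False if "0 < j" "j < length q" "q!0 = q!j" for j
  proof -
    let ?q = "drop j q"
    have "successively E (take j q @ drop j q)" using sq by simp
    then have "successively E ?q" by (simp only: successively_append_iff)
    moreover have "?q \<noteq> []" using that by simp
    moreover have "hd ?q = hd q" using that ne by (simp add: hd_drop_conv_nth hd_conv_nth)
    moreover have "last ?q = last q" using that by simp
    moreover have "length ?q < length q" using that by simp
    ultimately show False using mn[of ?q] set_drop_subset[of j q] by fastforce
  qed
  have "distinct q"
  proof (rule ccontr)
    assume "\<not> distinct q"
    then obtain i j where ij: "i < j" "j < length q" "q!i = q!j"
      by (metis distinct_conv_nth linorder_neqE_nat order.strict_trans)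
    show False
    proof (cases i)
      case 0 then show ?thesis using nope0[of j] ij by simp
    next
      case (Suc i')
      have "E (q!i') (q!i)" using successively_nth[OF sq, of i'] Suc ij by simp
      then show ?thesis using nope[of i j] ij Suc by simp
    qed
  qed
  moreover have "i = Suc j \<or> j = Suc i" if "i < length q" "j < length q" "E (q!i) (q!j)" for i j
  proof -
    have c: False if "i < j" "j < length q" "E (q!i) (q!j)" "j \<noteq> Suc i" for i j
      using nope[of "Suc i" j] that by simp
    show ?thesis
    proof (cases i j rule: linorder_cases)
      case less then show ?thesis using c[of i j] that by blast
    next
      case equal then show ?thesis using that irr by simp
    next
      case greater then show ?thesis using c[of j i] that sym by blast
    qed
  qed
  ultimately show ?thesis by blast
qed



definition simplicial :: "('a \<Rightarrow> 'a \<Rightarrow> bool) \<Rightarrow> 'a set \<Rightarrow> 'a \<Rightarrow> bool" where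
  "simplicial E W s \<longleftrightarrow> s \<in> W \<and> (\<forall>y\<in>W. \<forall>z\<in>W. E s y \<longrightarrow> E s z \<longrightarrow> y \<noteq> z \<longrightarrow> E y z)"

lemma rtranclp_sym_rel:
  assumes "\<And>x y. r x y \<Longrightarrow> r y x" "r\<^sup>*\<^sup>* x y" shows "r\<^sup>*\<^sup>* y x"
  using assms(2)
proof (induction rule: rtranclp_induct)
  case base then show ?case by simp
next
  case (step y z) then show ?case using assms(1) converse_rtranclp_into_rtranclp by metis
qed

lemma dirac:
  assumes sg: "simple_graph V E" and ch: "chordal V E"
  shows "W \<subseteq> V \<Longrightarrow> a \<in> W \<Longrightarrow> b \<in> W \<Longrightarrow> b \<noteq> a \<Longrightarrow> \<not> E a b
    \<Longrightarrow> \<exists>s. simplicial E W s \<and> s \<noteq> a \<and> \<not> E a s"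
proof (induction "card W" arbitrary: W a b rule: less_induct)
  case less
  note WV = less.prems(1) and aW = less.prems(2) and bW = less.prems(3)
    and ba = less.prems(4) and nab = less.prems(5)
  have sym: "\<And>x y. E x y \<Longrightarrow> E y x" and irr: "\<And>x. \<not> E x x"
    and EV: "\<And>x y. E x y \<Longrightarrow> x \<in> V \<and> y \<in> V" and finV: "finite V"
    using sg unfolding simple_graph_def by blast+
  have finW: "finite W" using finV WV finite_subset by blast
  define R where "R = {z\<in>W. z \<noteq> a \<and> \<not> E a z}"
  define r where "r = (\<lambda>x y. E x y \<and> x \<in> R \<and> y \<in> R)"
  define C where "C = {z. r\<^sup>*\<^sup>* b z}"
  define S where "S = {x\<in>W. E a x \<and> (\<exists>z\<in>C. E x z)}"
  have R_iff: "\<And>z. z \<in> R \<longleftrightarrow> z \<in> W \<and> z \<noteq> a \<and> \<not> E a z" by (simp add: R_def)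
  have S_iff: "\<And>x. x \<in> S \<longleftrightarrow> x \<in> W \<and> E a x \<and> (\<exists>z\<in>C. E x z)" by (simp add: S_def)
  have bR: "b \<in> R" using bW ba nab R_def by simp
  have bC: "b \<in> C" unfolding C_def by simp
  have CR: "C \<subseteq> R"
  proof
    fix z assume "z \<in> C"
    then have "r\<^sup>*\<^sup>* b z" unfolding C_def by simp
    then show "z \<in> R" using bR by (cases rule: rtranclp.cases) (auto simp: r_def)
  qed
  have rsym: "\<And>x y. r x y \<Longrightarrow> r y x" using sym unfolding r_def by blast
  have clos: "y \<in> C \<union> S" if "z \<in> C" "y \<in> W" "E z y" for z y
  proof -
    have zR: "z \<in> R" using that CR by blast
    have "y \<noteq> a"
    proof
      assume "y = a"
      then have "E a z" using that(3) sym by blast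
      then show False using zR R_iff by blast
    qed
    show ?thesis
    proof (cases "E a y")
      case True
      have "E y z" using that(3) sym by blast
      then have "y \<in> S" using True that(1,2) S_iff by blast
      then show ?thesis by blast
    next
      case False
      then have "y \<in> R" using \<open>y \<noteq> a\<close> that(2) R_iff by blast
      then have rzy: "r z y" unfolding r_def using zR that(3) by blast
      have "r\<^sup>*\<^sup>* b z" using that(1) unfolding C_def by blast
      then have "r\<^sup>*\<^sup>* b y" using rzy by (rule rtranclp.rtrancl_into_rtrancl)
      then show ?thesis unfolding C_def by blast
    qed
  qed
  have Sclique: "E x y" if xS: "x \<in> S" and yS: "y \<in> S" and xy: "x \<noteq> y" for x y
  proof (rule ccontr)
    assume nxy: "\<not> E x y"
    obtain cx where cx: "cx \<in> C" "E x cx" using xS S_iff by blast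
    obtain cy where cy: "cy \<in> C" "E y cy" using yS S_iff by blast
    have bcx: "r\<^sup>*\<^sup>* b cx" using cx C_def by simp
    have "r\<^sup>*\<^sup>* cx cy" using rtranclp_sym_rel[OF rsym bcx] cy C_def by simp
    then obtain p where p: "p \<noteq> []" "hd p = cx" "last p = cy" "successively r p"
      "\<forall>z\<in>set p. r\<^sup>*\<^sup>* cx z" using walk_exists by metis
    have pC: "set p \<subseteq> C" using p(5) bcx C_def by auto
    have pE: "successively E p" using p(4) by (rule successively_mono) (simp add: r_def)
    define q0 where "q0 = x # p @ [y]"
    define P where "P = (\<lambda>q. q \<noteq> [] \<and> hd q = x \<and> last q = y \<and> successively E q
       \<and> set q \<subseteq> insert x (insert y C))"
    have "successively E (p @ [y])" using pE p cy sym by (simp add: successively_append_iff)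
    then have "successively E q0" using p cx unfolding q0_def
      by (simp add: successively_Cons hd_append)
    then have "P q0" unfolding P_def q0_def using pC by auto
    then obtain q where Pq: "P q" and qmin: "\<And>q'. P q' \<Longrightarrow> length q \<le> length q'"
      using ex_has_least_nat[of P q0 length] by blast
    have qne: "q \<noteq> []" and hq: "hd q = x" and lq: "last q = y" and sq: "successively E q"
      and setq: "set q \<subseteq> insert x (insert y C)" using Pq P_def by auto
    have indq: "distinct q \<and> (\<forall>i j. i < length q \<longrightarrow> j < length q \<longrightarrow> E (q!i) (q!j) \<longrightarrow> i = Suc j \<or> j = Suc i)"
    proof (rule shortest_induced[OF sg sq qne])
      fix q' assume "q' \<noteq> []" "hd q' = hd q" "last q' = last q" "successively E q'" "set q' \<subseteq> set q"
      then have "P q'" using P_def hq lq setq by auto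
      then show "length q \<le> length q'" by (rule qmin)
    qed
    have q0x: "q!0 = x" using hq qne by (simp add: hd_conv_nth)
    have qny: "q!(length q - 1) = y" using lq qne by (simp add: last_conv_nth)
    have len: "length q \<ge> 3"
    proof (rule ccontr)
      assume "\<not> 3 \<le> length q"
      moreover have "length q \<noteq> 0" using qne by simp
      moreover have "length q \<noteq> 1" using q0x qny xy by auto
      moreover have "length q \<noteq> 2" using successively_nth[OF sq, of 0] q0x qny nxy by auto
      ultimately show False by linarith
    qed
    have xW: "x \<in> W" and yW: "y \<in> W" and ax: "E a x" and ay: "E a y" using xS yS S_iff by auto
    have RW: "R \<subseteq> W" using R_iff by auto
    show False
    proof (rule cycle_contra[OF sg ch, of q a])
      show "set q \<subseteq> V" using setq xW yW CR RW WV by blast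
      show "a \<in> V" using aW WV by blast
      have "a \<notin> C" using CR R_iff by blast
      moreover have "a \<noteq> x" "a \<noteq> y" using ax ay irr by auto
      ultimately show "a \<notin> set q" using setq by blast
      show "distinct q" using indq by blast
      show "3 \<le> length q" by (rule len)
      show "\<And>i. Suc i < length q \<Longrightarrow> E (q ! i) (q ! Suc i)" using successively_nth[OF sq] by blast
      show "\<And>i j. i < length q \<Longrightarrow> j < length q \<Longrightarrow> E (q ! i) (q ! j) \<Longrightarrow> i = Suc j \<or> j = Suc i"
        using indq by blast
      show "E a (q ! 0)" using q0x ax by simp
      show "E a (q ! (length q - 1))" using qny ay by simp
      fix i assume i: "0 < i" "i < length q - 1"
      have il: "i < length q" "0 < length q" "length q - 1 < length q" using i by auto
      have dq: "distinct q" using indq by blast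
      have "q!i \<noteq> q!0" using nth_eq_iff_index_eq[OF dq il(1) il(2)] i(1) by simp
      moreover have "q!i \<noteq> q!(length q - 1)" using nth_eq_iff_index_eq[OF dq il(1) il(3)] i(2) by simp
      ultimately have "q!i \<noteq> x" "q!i \<noteq> y" using q0x qny by auto
      moreover have "q!i \<in> set q" using il by simp
      ultimately have "q!i \<in> C" using setq by blast
      then show "\<not> E a (q ! i)" using CR R_iff by blast
    qed
  qed
  define W' where "W' = C \<union> S"
  have W'W: "W' \<subseteq> W" using CR R_iff S_iff unfolding W'_def by blast
  have aW': "a \<notin> W'" using CR R_iff S_iff irr unfolding W'_def by blast
  have cardlt: "card W' < card W"
    using psubset_card_mono[OF finW] W'W aW' aW by blast
  have W'V: "W' \<subseteq> V" using W'W WV by blast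
  have transfer: "simplicial E W s" if "s \<in> C" "simplicial E W' s" for s
    unfolding simplicial_def
  proof (intro conjI ballI impI)
    show "s \<in> W" using that W'W W'_def by blast
    fix y z assume "y \<in> W" "z \<in> W" "E s y" "E s z" "y \<noteq> z"
    then have "y \<in> W'" "z \<in> W'" using clos that(1) W'_def by auto
    then show "E y z" using that(2) \<open>E s y\<close> \<open>E s z\<close> \<open>y \<noteq> z\<close> unfolding simplicial_def by blast
  qed
  have fin: "\<exists>s. simplicial E W s \<and> s \<noteq> a \<and> \<not> E a s" if "s \<in> C" "simplicial E W' s" for s
    using transfer[OF that] that(1) CR R_iff by blast
  have IH: "\<exists>s. simplicial E W' s \<and> s \<noteq> a' \<and> \<not> E a' s"
    if "a' \<in> W'" "b' \<in> W'" "b' \<noteq> a'" "\<not> E a' b'" for a' b'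
    using less.hyps[OF cardlt W'V that] .
  have S_W': "S \<subseteq> W'" and C_W': "C \<subseteq> W'" unfolding W'_def by blast+
  have W'_cases: "x \<in> C \<or> x \<in> S" if "x \<in> W'" for x using that unfolding W'_def by blast
  have simpW: "s \<in> W'" if "simplicial E W' s" for s using that unfolding simplicial_def by blast
  show ?case
  proof (cases "\<forall>x\<in>W'. \<forall>y\<in>W'. x \<noteq> y \<longrightarrow> E x y")
    case True
    have "b \<in> W'" using bC C_W' by blast
    then have "simplicial E W' b" unfolding simplicial_def using True by blast
    then show ?thesis using fin bC by blast
  next
    case False
    then obtain p q where pq: "p \<in> W'" "q \<in> W'" "p \<noteq> q" "\<not> E p q" by blast
    show ?thesis
    proof (cases "\<exists>x\<in>S. \<exists>y\<in>W'. y \<noteq> x \<and> \<not> E x y")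
      case True
      then obtain x y where xy: "x \<in> S" "y \<in> W'" "y \<noteq> x" "\<not> E x y" by blast
      have "x \<in> W'" using xy(1) S_W' by blast
      then obtain s where s: "simplicial E W' s" "s \<noteq> x" "\<not> E x s"
        using IH[OF _ xy(2,3,4)] by blast
      have "s \<notin> S"
      proof
        assume "s \<in> S"
        then have "E s x" using Sclique xy(1) s(2) by blast
        then show False using s(3) sym by blast
      qed
      then have "s \<in> C" using W'_cases simpW[OF s(1)] by blast
      then show ?thesis using fin s(1) by blast
    next
      case False
      have "q \<noteq> p" using pq(3) by simp
      then obtain s where s: "simplicial E W' s" "s \<noteq> p" "\<not> E p s"
        using IH[OF pq(1) pq(2) _ pq(4)] by blast
      have "s \<notin> S"
      proof
        assume sS: "s \<in> S"
        have "\<forall>y\<in>W'. y \<noteq> s \<longrightarrow> E s y" using False sS by blast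
        then have "E s p" using pq(1) s(2) by fastforce
        then show False using s(3) sym by blast
      qed
      then have "s \<in> C" using W'_cases simpW[OF s(1)] by blast
      then show ?thesis using fin s(1) by blast
    qed
  qed
qed



lemma exposed_of_good:
  assumes sg: "simple_graph V E" and vu: "E v u" and z0: "E u z0" "E v z0"
    and cl: "\<And>y z. E u y \<Longrightarrow> E v y \<Longrightarrow> E u z \<Longrightarrow> E v z \<Longrightarrow> y \<noteq> z \<Longrightarrow> E y z"
  shows "exposed_edge V E v u"
proof -
  have sym: "\<And>x y. E x y \<Longrightarrow> E y x" and irr: "\<And>x. \<not> E x x"
    and EV: "\<And>x y. E x y \<Longrightarrow> x \<in> V \<and> y \<in> V"
    using sg unfolding simple_graph_def by blast+
  define M where "M = {v, u} \<union> {z. E u z \<and> E v z}"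
  have M_iff: "\<And>z. z \<in> M \<longleftrightarrow> z = v \<or> z = u \<or> (E u z \<and> E v z)" unfolding M_def by blast
  have Mcl: "clique V E M"
    unfolding clique_def
  proof (intro conjI ballI impI subsetI)
    fix x assume "x \<in> M"
    then have "x = v \<or> x = u \<or> (E u x \<and> E v x)" using M_iff by blast
    then show "x \<in> V" using EV vu by blast
  next
    fix x y assume x: "x \<in> M" and y: "y \<in> M" and xy: "x \<noteq> y"
    have xc: "x = v \<or> x = u \<or> (E u x \<and> E v x)" using x M_iff by blast
    have yc: "y = v \<or> y = u \<or> (E u y \<and> E v y)" using y M_iff by blast
    have vu': "E u v" using sym vu by blast
    have esym: "\<And>a b. E a b \<longleftrightarrow> E b a" using sym by blast
    show "E x y"
    proof (cases "E u y \<and> E v y")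
      case yK: True
      show ?thesis
      proof (cases "E u x \<and> E v x")
        case True then show ?thesis using yK cl xy by blast
      next
        case False then have "x = v \<or> x = u" using xc by blast
        then show ?thesis using yK by blast
      qed
    next
      case yN: False
      then have yvu: "y = v \<or> y = u" using yc by blast
      show ?thesis
      proof (cases "E u x \<and> E v x")
        case True
        then have "E y x" using yvu by blast
        then show ?thesis using sym by blast
      next
        case False then have "x = v \<or> x = u" using xc by blast
        then show ?thesis using yvu xy vu vu' by blast
      qed
    qed
  qed
  have sub: "D \<subseteq> M" if "clique V E D" "{v, u} \<subseteq> D" for D
  proof
    fix z assume z: "z \<in> D"
    show "z \<in> M"
    proof (cases "z = v \<or> z = u")
      case True then show ?thesis using M_iff by blast
    next
      case False
      then have "E v z" "E u z" using that z unfolding clique_def by auto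
      then show ?thesis using M_iff by blast
    qed
  qed
  have vuM: "{v, u} \<subseteq> M" using M_iff by blast
  have Mmax: "maximal_clique V E M"
    unfolding maximal_clique_def using Mcl sub vuM by blast
  have uniq: "\<exists>!C. maximal_clique V E C \<and> {v, u} \<subseteq> C"
  proof (rule ex1I[of _ M])
    show "maximal_clique V E M \<and> {v, u} \<subseteq> M" using Mmax vuM by blast
    fix C assume C: "maximal_clique V E C \<and> {v, u} \<subseteq> C"
    then have "C \<subseteq> M" using sub unfolding maximal_clique_def by blast
    then show "C = M" using C Mcl unfolding maximal_clique_def by blast
  qed
  have nf: "\<not> facet_edge V E v u"
  proof
    assume "facet_edge V E v u"
    then have mc: "maximal_clique V E {v, u}" unfolding facet_edge_def by blast
    have "{v, u} \<subseteq> M" by (rule vuM)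
    then have "M = {v, u}" using mc Mcl unfolding maximal_clique_def by blast
    moreover have "z0 \<in> M" using M_iff z0 by blast
    moreover have "z0 \<noteq> v" "z0 \<noteq> u" using z0 irr by auto
    ultimately show False by blast
  qed
  show ?thesis unfolding exposed_edge_def using vu uniq nf by blast
qed

lemma three_elems:
  assumes "card C \<ge> 3" "v \<in> C"
  shows "\<exists>b c. b \<in> C \<and> c \<in> C \<and> b \<noteq> v \<and> c \<noteq> v \<and> b \<noteq> c"
proof -
  have fin: "finite C" using assms(1) card.infinite by fastforce
  have "card (C - {v}) \<ge> 2" using assms fin by (simp add: card_Diff_singleton)
  then have "C - {v} \<noteq> {}" by (intro notI) simp
  then obtain b where b: "b \<in> C - {v}" by blast
  have "card (C - {v} - {b}) \<ge> 1" using \<open>card (C - {v}) \<ge> 2\<close> b fin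
    by (simp add: card_Diff_singleton)
  then have "C - {v} - {b} \<noteq> {}" by (intro notI) simp
  then obtain c where c: "c \<in> C - {v} - {b}" by blast
  have "b \<in> C" "c \<in> C" "b \<noteq> v" "c \<noteq> v" "b \<noteq> c" using b c by auto
  then show ?thesis by blast
qed

theorem lemma2p11:
  fixes V :: "'a set" and E :: "'a \<Rightarrow> 'a \<Rightarrow> bool" and v :: 'a
  assumes "simple_graph V E"
    and "chordal V E"
    and "v \<in> V"
    and "\<exists>C. maximal_clique V E C \<and> v \<in> C \<and> card C \<ge> 3"
  shows "\<exists>u w. u \<noteq> w \<and> exposed_edge V E v u \<and> exposed_edge V E v w"
proof -
  note sg = assms(1) and ch = assms(2)
  have sym: "\<And>x y. E x y \<Longrightarrow> E y x" and irr: "\<And>x. \<not> E x x"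
    and EV: "\<And>x y. E x y \<Longrightarrow> x \<in> V \<and> y \<in> V"
    using sg unfolding simple_graph_def by blast+
  obtain C0 where C0: "maximal_clique V E C0" "v \<in> C0" "card C0 \<ge> 3" using assms(4) by blast
  obtain b c where bc: "b \<in> C0" "c \<in> C0" "b \<noteq> v" "c \<noteq> v" "b \<noteq> c"
    using three_elems[OF C0(3) C0(2)] by blast
  have cl0: "clique V E C0" using C0(1) unfolding maximal_clique_def by blast
  have cl0': "\<And>x y. x \<in> C0 \<Longrightarrow> y \<in> C0 \<Longrightarrow> x \<noteq> y \<Longrightarrow> E x y"
    using cl0 unfolding clique_def by blast
  have vb: "E v b" using cl0'[OF C0(2) bc(1)] bc(3) by simp
  have vc: "E v c" using cl0'[OF C0(2) bc(2)] bc(4) by simp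
  have ebc: "E b c" using cl0'[OF bc(1) bc(2) bc(5)] .
  define H where "H = {z. E v z}"
  have H_iff: "\<And>z. z \<in> H \<longleftrightarrow> E v z" unfolding H_def by simp
  have HV: "H \<subseteq> V" using H_iff EV by blast
  define r where "r = (\<lambda>x y. E x y \<and> x \<in> H \<and> y \<in> H)"
  define K where "K = {z. r\<^sup>*\<^sup>* b z}"
  have bH: "b \<in> H" using vb H_iff by blast
  have cH: "c \<in> H" using vc H_iff by blast
  have bK: "b \<in> K" unfolding K_def by simp
  have KH: "K \<subseteq> H"
  proof
    fix z assume "z \<in> K"
    then have "r\<^sup>*\<^sup>* b z" unfolding K_def by simp
    then show "z \<in> H" using bH by (cases rule: rtranclp.cases) (auto simp: r_def)
  qed
  have KV: "K \<subseteq> V" using KH HV by blast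
  have closK: "y \<in> K" if "z \<in> K" "y \<in> H" "E z y" for z y
  proof -
    have "r z y" unfolding r_def using that KH by blast
    moreover have "r\<^sup>*\<^sup>* b z" using that(1) unfolding K_def by blast
    ultimately have "r\<^sup>*\<^sup>* b y" by (rule rtranclp.rtrancl_into_rtrancl[rotated])
    then show ?thesis unfolding K_def by blast
  qed
  have cK: "c \<in> K" using closK[OF bK cH ebc] .
  have nbr: "\<exists>y\<in>K. E z y" if "z \<in> K" for z
  proof -
    have "r\<^sup>*\<^sup>* b z" using that unfolding K_def by blast
    then show ?thesis
    proof (cases rule: rtranclp.cases)
      case rtrancl_refl then show ?thesis using cK ebc by blast
    next
      case (rtrancl_into_rtrancl w)
      then have "w \<in> K" "E w z" unfolding K_def r_def by auto
      then show ?thesis using sym by blast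
    qed
  qed
  have good: "exposed_edge V E v s" if "simplicial E K s" for s
  proof -
    have sK: "s \<in> K" using that unfolding simplicial_def by blast
    obtain z where z: "z \<in> K" "E s z" using nbr[OF sK] by blast
    show ?thesis
    proof (rule exposed_of_good[OF sg])
      show "E v s" using sK KH H_iff by blast
      show "E s z" by (rule z(2))
      show "E v z" using z(1) KH H_iff by blast
      fix y w assume a: "E s y" "E v y" "E s w" "E v w" "y \<noteq> w"
      have "y \<in> K" using closK[OF sK _ a(1)] a(2) H_iff by blast
      moreover have "w \<in> K" using closK[OF sK _ a(3)] a(4) H_iff by blast
      ultimately show "E y w" using that a(1,3,5) unfolding simplicial_def by blast
    qed
  qed
  show ?thesis
  proof (cases "\<forall>x\<in>K. \<forall>y\<in>K. x \<noteq> y \<longrightarrow> E x y")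
    case True
    have "simplicial E K b" "simplicial E K c"
      unfolding simplicial_def using True bK cK by blast+
    then show ?thesis using good bc(5) by blast
  next
    case False
    then obtain p q where pq: "p \<in> K" "q \<in> K" "p \<noteq> q" "\<not> E p q" by blast
    obtain s1 where s1: "simplicial E K s1" "s1 \<noteq> p" "\<not> E p s1"
      using dirac[OF sg ch KV pq(1) pq(2)] pq(3,4) by metis
    have s1K: "s1 \<in> K" using s1(1) unfolding simplicial_def by blast
    have "\<not> E s1 p" using s1(3) sym by blast
    then obtain s2 where s2: "simplicial E K s2" "s2 \<noteq> s1"
      using dirac[OF sg ch KV s1K pq(1)] s1(2) by metis
    show ?thesis using good s1(1) s2 by metis
  qed
qed

end
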